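(* Let $F$ be a Sturmian set on an alphabet $A$ with $k$ letters. For any finite $F$-maximal bifix code $X\subset F$, one has $\mathrm{Card}(X)=(k-1)\,d_F(X)+1$.
   Context: For a set $F$ of words and a word $u\in F$, $u$ is right-special if $ua\in F$ for at least two letters $a$. An infinite word $x$ over $A$ is episturmian if its set of factors $F(x)$ is closed under reversal and contains, for each $n\ge1$, at most one right-special word of length $n$; it is strict episturmian if moreover it has exactly one right-special factor of each length and every right-special factor $u$ satisfies $ua\in F(x)$ for all $a\in A$. A Sturmian set is the set of factors of a strict episturmian word. A bifix code is a set of nonempty words none of which is a proper prefix or proper suffix of another; $X\subset F$ is $F$-maximal bifix if not properly contained in a bifix code contained in $F$. A parse of $w$ with respect to $X$ is a triple $(v,x,u)$ with $w=vxu$, $v$ having no suffix in $X$, $x\in X^*$, $u$ having no prefix in $X$; $\delta_X(w)$ is the number of parses, and $d_F(X)=\max_{w\in F}\delta_X(w)$. *)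

theory Defs
  imports Main "HOL-Library.Sublist" "HOL-Library.Extended_Nat"
begin

definition factors :: "(nat \<Rightarrow> 'a) \<Rightarrow> 'a list set" where
  "factors x = {w. \<exists>i n. w = map x [i..<i+n]}"

definition right_special :: "'a list set \<Rightarrow> 'a list \<Rightarrow> bool" where
  "right_special F u \<longleftrightarrow> u \<in> F \<and> (\<exists>a b. a \<noteq> b \<and> u @ [a] \<in> F \<and> u @ [b] \<in> F)"

definition episturmian :: "(nat \<Rightarrow> 'a) \<Rightarrow> bool" where
  "episturmian x \<longleftrightarrow>
     (\<forall>w \<in> factors x. rev w \<in> factors x) \<and>
     (\<forall>n \<ge> 1. \<forall>u v. length u = n \<and> length v = n \<and>
        right_special (factors x) u \<and> right_special (factors x) v \<longrightarrow> u = v)"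

definition strict_episturmian :: "'a set \<Rightarrow> (nat \<Rightarrow> 'a) \<Rightarrow> bool" where
  "strict_episturmian A x \<longleftrightarrow>
     (\<forall>i. x i \<in> A) \<and> episturmian x \<and>
     (\<forall>n \<ge> 1. \<exists>u. length u = n \<and> right_special (factors x) u) \<and>
     (\<forall>u. right_special (factors x) u \<longrightarrow> (\<forall>a \<in> A. u @ [a] \<in> factors x))"

definition sturmian_set :: "'a set \<Rightarrow> 'a list set \<Rightarrow> bool" where
  "sturmian_set A F \<longleftrightarrow> (\<exists>x. strict_episturmian A x \<and> F = factors x)"

definition bifix_code :: "'a list set \<Rightarrow> bool" where
  "bifix_code X \<longleftrightarrow> [] \<notin> X \<and>
     (\<forall>x \<in> X. \<forall>y \<in> X. \<not> strict_prefix x y \<and> \<not> strict_suffix x y)"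

definition F_maximal_bifix :: "'a list set \<Rightarrow> 'a list set \<Rightarrow> bool" where
  "F_maximal_bifix F X \<longleftrightarrow> bifix_code X \<and> X \<subseteq> F \<and>
     (\<forall>Y. bifix_code Y \<and> Y \<subseteq> F \<and> X \<subseteq> Y \<longrightarrow> Y = X)"

definition parses :: "'a list set \<Rightarrow> 'a list \<Rightarrow> ('a list \<times> 'a list \<times> 'a list) set" where
  "parses X w = {(v, y, u). w = v @ y @ u \<and> \<not> (\<exists>s \<in> X. suffix s v) \<and>
      y \<in> concat ` lists X \<and> \<not> (\<exists>p \<in> X. prefix p u)}"

definition delta :: "'a list set \<Rightarrow> 'a list \<Rightarrow> nat" where
  "delta X w = card (parses X w)"

definition degree :: "'a list set \<Rightarrow> 'a list set \<Rightarrow> enat" where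
  "degree F X = (SUP w \<in> F. enat (delta X w))"

end

theory Submission
  imports Defs
begin

definition occ :: "(nat \<Rightarrow> 'a) \<Rightarrow> 'a list \<Rightarrow> nat \<Rightarrow> bool" where
  "occ x w i \<longleftrightarrow> map x [i..<i+length w] = w"

lemma factors_iff: "w \<in> factors x \<longleftrightarrow> (\<exists>i. occ x w i)"
  unfolding factors_def occ_def mem_Collect_eq
proof
  assume "\<exists>i n. w = map x [i..<i + n]"
  then obtain i n where "w = map x [i..<i + n]" by blast
  then show "\<exists>i. map x [i..<i + length w] = w" by auto
qed (metis)

lemma occ_nth: "occ x w i \<longleftrightarrow> (\<forall>s<length w. x (i+s) = w!s)"
  unfolding occ_def list_eq_iff_nth_eq by auto

lemma occ_append: "occ x (u@v) i \<longleftrightarrow> occ x u i \<and> occ x v (i + length u)"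
proof -
  have "(\<forall>s<length (u@v). x (i+s) = (u@v)!s) \<longleftrightarrow>
        (\<forall>s<length u. x (i+s) = u!s) \<and> (\<forall>s<length v. x (i + length u+s) = v!s)"
  proof safe
    fix s assume H: "\<forall>s<length (u@v). x (i+s) = (u@v)!s"
    { assume "s < length u" thus "x (i+s) = u!s" using H[rule_format, of s] by (simp add: nth_append) }
    { assume "s < length v" thus "x (i+length u+s) = v!s" using H[rule_format, of "length u + s"]
        by (simp add: nth_append add.assoc) }
  next
    fix s assume H1: "\<forall>s<length u. x (i+s) = u!s" and H2: "\<forall>s<length v. x (i + length u+s) = v!s"
      and s: "s < length (u@v)"
    show "x (i+s) = (u@v)!s"
    proof (cases "s < length u")
      case True thus ?thesis using H1 by (simp add: nth_append)
    next
      case False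
      then obtain t where t: "s = length u + t" by (metis le_add_diff_inverse not_less)
      thus ?thesis using H2[rule_format, of t] s by (simp add: nth_append add.assoc)
    qed
  qed
  thus ?thesis unfolding occ_nth .
qed

lemma occ_ext: "occ x w i \<Longrightarrow> occ x (w@[x (i+length w)]) i"
  by (simp add: occ_append) (simp add: occ_nth)

lemma factors_append: "u@v \<in> factors x \<Longrightarrow> u \<in> factors x \<and> v \<in> factors x"
  unfolding factors_iff using occ_append by blast

lemma factors_ext: "w \<in> factors x \<Longrightarrow> \<exists>a. w@[a] \<in> factors x"
  unfolding factors_iff using occ_ext by blast

lemma factors_prefix: "prefix u w \<Longrightarrow> w \<in> factors x \<Longrightarrow> u \<in> factors x"
  by (auto simp: prefix_def dest: factors_append)
lemma factors_suffix: "suffix u w \<Longrightarrow> w \<in> factors x \<Longrightarrow> u \<in> factors x"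
  by (auto simp: suffix_def dest: factors_append)

locale sturm = fixes A :: "'a set" and x :: "nat \<Rightarrow> 'a"
  assumes se: "strict_episturmian A x"
begin

abbreviation "F \<equiv> factors x"

lemma se_all: "(\<forall>i. x i \<in> A) \<and> episturmian x \<and>
     (\<forall>n \<ge> 1. \<exists>u. length u = n \<and> right_special F u) \<and>
     (\<forall>u. right_special F u \<longrightarrow> (\<forall>a \<in> A. u @ [a] \<in> F))"
  using se unfolding strict_episturmian_def .
lemmas se1 = se_all[THEN conjunct1]
lemmas se2 = se_all[THEN conjunct2, THEN conjunct1]
lemmas se3 = se_all[THEN conjunct2, THEN conjunct2, THEN conjunct1]
lemmas se4 = se_all[THEN conjunct2, THEN conjunct2, THEN conjunct2]
lemma ep_all: "(\<forall>w \<in> F. rev w \<in> F) \<and>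
     (\<forall>n \<ge> 1. \<forall>u v. length u = n \<and> length v = n \<and>
        right_special F u \<and> right_special F v \<longrightarrow> u = v)"
  using se2 unfolding episturmian_def .
lemmas ep1 = ep_all[THEN conjunct1]
lemmas ep2 = ep_all[THEN conjunct2]

lemma letters: "x i \<in> A" using se1 by simp

lemma rev_closed: "w \<in> F \<Longrightarrow> rev w \<in> F"
  using ep1 by simp

lemma ext_in_A: "u@[a] \<in> F \<Longrightarrow> a \<in> A"
proof -
  assume "u@[a] \<in> F"
  then obtain i where "occ x (u@[a]) i" by (auto simp: factors_iff)
  hence "x (i + length u) = a" by (simp add: occ_append) (simp add: occ_nth)
  thus ?thesis using letters by metis
qed

lemma rs_all: "right_special F u \<Longrightarrow> a \<in> A \<Longrightarrow> u@[a] \<in> F"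
  using se4 by blast

lemma rs_unique: "right_special F u \<Longrightarrow> right_special F v \<Longrightarrow> length u = length v \<Longrightarrow> u = v"
proof (cases "length u = 0")
  case True thus "length u = length v \<Longrightarrow> u = v" by simp
next
  case False
  assume "right_special F u" "right_special F v" "length u = length v"
  thus ?thesis using ep2[rule_format, of "length u" u v] False by linarith
qed

lemma rs_suffix: "right_special F w \<Longrightarrow> suffix u w \<Longrightarrow> right_special F u"
proof -
  assume rs: "right_special F w" and su: "suffix u w"
  then obtain a b where ab: "a \<noteq> b" "w@[a] \<in> F" "w@[b] \<in> F" "w \<in> F"
    unfolding right_special_def by metis
  have "\<And>c. suffix (u@[c]) (w@[c])" using su by (auto simp: suffix_def)
  hence "u@[a] \<in> F" "u@[b] \<in> F" using ab factors_suffix by blast+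
  moreover have "u \<in> F" using ab su factors_suffix by blast
  ultimately show ?thesis unfolding right_special_def using ab by blast
qed

lemma rs_exists: "\<exists>u. length u = n \<and> right_special F u"
proof (cases "n = 0")
  case False hence n1: "1 \<le> n" by simp
  have H: "1 \<le> n \<longrightarrow> (\<exists>u. length u = n \<and> right_special F u)" using se3 by (rule spec)
  from H n1 show ?thesis by (rule mp)
next
  case True
  have H: "1 \<le> (1::nat) \<longrightarrow> (\<exists>u. length u = 1 \<and> right_special F u)" using se3 by (rule spec)
  have "(1::nat) \<le> 1" by simp
  with H obtain u where "length u = 1" "right_special F u" by blast
  hence "right_special F []" using rs_suffix Nil_suffix by metis
  thus ?thesis using True by auto
qed

lemma not_rs_unique: "u \<in> F \<Longrightarrow> \<not> right_special F u \<Longrightarrow> u@[a] \<in> F \<Longrightarrow> u@[b] \<in> F \<Longrightarrow> a = b"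
  unfolding right_special_def by metis

lemma pal:
  assumes occ: "occ x w i" and no: "\<forall>j>i. \<not> occ x w j" and m: "m \<ge> i + length w"
  shows "\<exists>L\<ge>m. \<forall>t<L. x t = x (L-1-t)"
proof -
  define q where "q = map x [0..<m]"
  have "occ x q 0" unfolding q_def occ_def by simp
  hence "q \<in> F" unfolding factors_iff by blast
  hence "rev q \<in> F" by (rule rev_closed)
  then obtain j where j: "occ x (rev q) j" by (auto simp: factors_iff)
  hence j2: "map x [j..<j+m] = rev q" unfolding occ_def q_def by simp
  define v where "v = map x [0..<j+m]"
  have "[0..<j+m] = [0..<j] @ [j..<j+m]" by (rule upt_add_eq_append) simp
  hence v: "v = map x [0..<j] @ rev q" unfolding v_def using j2 by simp
  have "occ x v 0" unfolding v_def occ_def by simp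
  hence "v \<in> F" unfolding factors_iff by blast
  hence "rev v \<in> F" by (rule rev_closed)
  then obtain j' where j': "occ x (rev v) j'" by (auto simp: factors_iff)
  have "rev v = q @ rev (map x [0..<j])" using v by simp
  hence "occ x q j'" using j' by (simp add: occ_append)
  hence qj: "\<forall>s<m. x (j'+s) = x s" unfolding occ_nth q_def by simp
  have "j' = 0"
  proof (rule ccontr)
    assume "j' \<noteq> 0"
    have "occ x w (j'+i)" unfolding occ_nth
    proof (intro allI impI)
      fix s assume s: "s < length w"
      have "i + s < m" using s m by linarith
      hence "x (j'+(i+s)) = x (i+s)" using qj by simp
      thus "x (j'+i+s) = w!s" using occ s unfolding occ_nth by (simp add: add.assoc)
    qed
    thus False using no \<open>j' \<noteq> 0\<close> by auto
  qed
  hence H: "\<forall>t<j+m. x t = (rev v)!t" using j' unfolding occ_nth v_def by simp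
  have "\<forall>t<j+m. x t = x (j+m-1-t)"
  proof (intro allI impI)
    fix t assume t: "t < j+m"
    have "x t = (rev v)!t" using mp[OF spec[OF H, of t] t] .
    also have "\<dots> = v ! (length v - Suc t)" using t unfolding v_def by (simp add: rev_nth)
    also have "\<dots> = x (j+m-1-t)" using t unfolding v_def by simp
    finally show "x t = x (j+m-1-t)" .
  qed
  moreover have "j + m \<ge> m" by simp
  ultimately show ?thesis by blast
qed

lemma recur_step: assumes "occ x w i" shows "\<exists>j>i. occ x w j"
proof (rule ccontr)
  assume no: "\<not> (\<exists>j>i. occ x w j)"
  obtain L1 where L1: "L1 \<ge> i + length w" "\<forall>t<L1. x t = x (L1-1-t)"
    using pal[OF assms _ order_refl] no by blast
  obtain L2 where L2: "L2 \<ge> L1 + 1" "\<forall>t<L2. x t = x (L2-1-t)"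
    using pal[OF assms, of "L1+1"] no L1 by auto
  have "occ x w (L2-L1+i)" unfolding occ_nth
  proof (intro allI impI)
    fix s assume s: "s < length w"
    define t where "t = i + s"
    have t: "t < L1" using s L1 t_def by simp
    have "x (L2-L1+i+s) = x (L2-L1+t)" by (simp add: t_def add.assoc)
    also have "\<dots> = x (L2-1-(L2-L1+t))"
    proof -
      have "L2-L1+t < L2" using t L2(1) by simp
      thus ?thesis using mp[OF spec[OF L2(2), of "L2-L1+t"]] by simp
    qed
    also have "L2-1-(L2-L1+t) = L1-1-t" using t L2(1) by simp
    also have "x (L1-1-t) = x t" using mp[OF spec[OF L1(2), of t] t] by (rule sym)
    finally show "x (L2-L1+i+s) = w!s" using assms s unfolding occ_nth t_def by simp
  qed
  moreover have "L2-L1+i > i" using L2 by simp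
  ultimately show False using no by blast
qed

lemma recur: assumes "w \<in> F" shows "\<exists>j\<ge>N. occ x w j"
proof (induction N)
  case 0 thus ?case using assms factors_iff by blast
next
  case (Suc N)
  then obtain j where j: "j \<ge> N" "occ x w j" by blast
  show ?case
  proof (cases "j \<ge> Suc N")
    case True thus ?thesis using j by blast
  next
    case False
    obtain j' where "j' > j" "occ x w j'" using recur_step[OF j(2)] by blast
    thus ?thesis using j by (intro exI[of _ j']) simp
  qed
qed

end

definition Cat :: "'a list set \<Rightarrow> 'a list set" where "Cat X = concat ` lists X"
definition nosuf :: "'a list set \<Rightarrow> 'a list \<Rightarrow> bool" where "nosuf X v \<longleftrightarrow> \<not> (\<exists>s\<in>X. suffix s v)"
definition nopre :: "'a list set \<Rightarrow> 'a list \<Rightarrow> bool" where "nopre X u \<longleftrightarrow> \<not> (\<exists>p\<in>X. prefix p u)"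

lemma parses_alt: "parses X w = {(v, y, u). w = v @ y @ u \<and> nosuf X v \<and> y \<in> Cat X \<and> nopre X u}"
  unfolding parses_def Cat_def nosuf_def nopre_def by simp

lemma Cat_Nil: "[] \<in> Cat X"
  unfolding Cat_def by (rule image_eqI[of _ _ "[]"]) auto

lemma Cat_snoc: "y \<in> Cat X \<Longrightarrow> x \<in> X \<Longrightarrow> y @ x \<in> Cat X"
proof -
  assume "y \<in> Cat X" "x \<in> X"
  then obtain l where "y = concat l" "l \<in> lists X" unfolding Cat_def by blast
  hence "y @ x = concat (l @ [x])" "l @ [x] \<in> lists X" using \<open>x \<in> X\<close> by auto
  thus ?thesis unfolding Cat_def by blast
qed

lemma Cat_cases: "y \<in> Cat X \<Longrightarrow> y = [] \<or> (\<exists>y' x. y = y' @ x \<and> y' \<in> Cat X \<and> x \<in> X)"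
proof -
  assume "y \<in> Cat X"
  then obtain l where l: "y = concat l" "l \<in> lists X" unfolding Cat_def by blast
  show ?thesis
  proof (cases l rule: rev_cases)
    case Nil thus ?thesis using l by simp
  next
    case (snoc l' x)
    hence "y = concat l' @ x" "concat l' \<in> Cat X" "x \<in> X" using l unfolding Cat_def by auto
    thus ?thesis by blast
  qed
qed

lemma Cat_rev: "y \<in> Cat X \<Longrightarrow> rev y \<in> Cat (rev ` X)"
proof -
  assume "y \<in> Cat X"
  then obtain l where l: "y = concat l" "l \<in> lists X" unfolding Cat_def by blast
  have "rev y = concat (rev (map rev l))" using l by (simp add: rev_concat rev_map)
  moreover have "rev (map rev l) \<in> lists (rev ` X)" using l by auto
  ultimately show ?thesis unfolding Cat_def by blast
qed

lemma decomp_ex: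
  assumes "[] \<notin> X" shows "\<exists>v y. z = v @ y \<and> nosuf X v \<and> y \<in> Cat X"
proof (induction "length z" arbitrary: z rule: less_induct)
  case less
  show ?case
  proof (cases "nosuf X z")
    case True thus ?thesis using Cat_Nil by (intro exI[of _ z] exI[of _ "[]"]) simp
  next
    case False
    then obtain s where s: "s \<in> X" "suffix s z" unfolding nosuf_def by blast
    then obtain z' where z': "z = z' @ s" unfolding suffix_def by blast
    have "s \<noteq> []" using s assms by metis
    hence "length z' < length z" using z' by simp
    then obtain v y where "z' = v @ y" "nosuf X v" "y \<in> Cat X" using less by blast
    thus ?thesis using z' Cat_snoc[OF _ s(1)] by (intro exI[of _ v] exI[of _ "y @ s"]) simp
  qed
qed

lemma decomp_un:
  assumes ne: "[] \<notin> X" and sc: "\<forall>x\<in>X. \<forall>y\<in>X. \<not> strict_suffix x y"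
  shows "z = v1 @ y1 \<Longrightarrow> z = v2 @ y2 \<Longrightarrow> nosuf X v1 \<Longrightarrow> nosuf X v2 \<Longrightarrow>
         y1 \<in> Cat X \<Longrightarrow> y2 \<in> Cat X \<Longrightarrow> v1 = v2 \<and> y1 = y2"
proof (induction "length z" arbitrary: z v1 v2 y1 y2 rule: less_induct)
  case less
  note h = less.prems
  consider "y1 = []" "y2 = []"
    | y2' x2 where "y1 = []" "y2 = y2' @ x2" "y2' \<in> Cat X" "x2 \<in> X"
    | y1' x1 where "y2 = []" "y1 = y1' @ x1" "y1' \<in> Cat X" "x1 \<in> X"
    | y1' x1 y2' x2 where "y1 = y1' @ x1" "y1' \<in> Cat X" "x1 \<in> X" "y2 = y2' @ x2" "y2' \<in> Cat X" "x2 \<in> X"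
    using Cat_cases[OF h(5)] Cat_cases[OF h(6)] by metis
  thus ?case
  proof cases
    case 1 thus ?thesis using h by simp
  next
    case 2
    hence "suffix x2 v1" using h unfolding suffix_def by (metis append_Nil2 append_assoc)
    thus ?thesis using h(3) 2 unfolding nosuf_def by blast
  next
    case 3
    hence "suffix x1 v2" using h unfolding suffix_def by (metis append_Nil2 append_assoc)
    thus ?thesis using h(4) 3 unfolding nosuf_def by blast
  next
    case 4
    have s1: "suffix x1 z" using h 4 unfolding suffix_def by (metis append_assoc)
    have s2: "suffix x2 z" using h 4 unfolding suffix_def by (metis append_assoc)
    have "suffix x1 x2 \<or> suffix x2 x1" using suffix_same_cases[OF s1 s2] .
    hence "x1 = x2" using sc 4 unfolding strict_suffix_def by metis
    hence e: "v1 @ y1' = v2 @ y2'" using h 4 by simp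
    have "x1 \<noteq> []" using ne 4 by metis
    hence "length (v1 @ y1') < length z" using h 4 by simp
    hence "v1 = v2 \<and> y1' = y2'" using less.hyps[OF _ refl e h(3) h(4) 4(2) 4(5)] by blast
    thus ?thesis using 4 \<open>x1 = x2\<close> by simp
  qed
qed

lemma parses_card_suf:
  assumes ne: "[] \<notin> X" and sc: "\<forall>x\<in>X. \<forall>y\<in>X. \<not> strict_suffix x y"
  shows "card (parses X w) = card {u. suffix u w \<and> nopre X u}"
proof -
  let ?f = "\<lambda>(v::'a list, y::'a list, u::'a list). u"
  have "bij_betw ?f (parses X w) {u. suffix u w \<and> nopre X u}"
    unfolding bij_betw_def
  proof
    show "inj_on ?f (parses X w)"
    proof (rule inj_onI)
      fix a b assume a: "a \<in> parses X w" and b: "b \<in> parses X w" and e: "?f a = ?f b"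
      obtain v1 y1 u1 where a': "a = (v1,y1,u1)" by (cases a) auto
      obtain v2 y2 u2 where b': "b = (v2,y2,u2)" by (cases b) auto
      have "u1 = u2" using e a' b' by simp
      have A: "w = v1 @ y1 @ u1" "nosuf X v1" "y1 \<in> Cat X" using a a' unfolding parses_alt by auto
      have B: "w = v2 @ y2 @ u2" "nosuf X v2" "y2 \<in> Cat X" using b b' unfolding parses_alt by auto
      have "v1 @ y1 = v2 @ y2" using A(1) B(1) \<open>u1 = u2\<close> by simp
      hence "v1 = v2 \<and> y1 = y2" using decomp_un[OF ne sc refl _ A(2) B(2) A(3) B(3)] by simp
      thus "a = b" using a' b' \<open>u1 = u2\<close> by simp
    qed
  next
    show "?f ` parses X w = {u. suffix u w \<and> nopre X u}"
    proof (rule set_eqI, rule iffI)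
      fix u assume "u \<in> ?f ` parses X w"
      then obtain v y where "(v,y,u) \<in> parses X w" by auto
      hence "w = (v @ y) @ u" "nopre X u" unfolding parses_alt by auto
      thus "u \<in> {u. suffix u w \<and> nopre X u}" unfolding suffix_def by blast
    next
      fix u assume "u \<in> {u. suffix u w \<and> nopre X u}"
      hence u: "suffix u w" "nopre X u" by auto
      then obtain z where z: "w = z @ u" unfolding suffix_def by blast
      obtain v y where "z = v @ y" "nosuf X v" "y \<in> Cat X" using decomp_ex[OF ne] by blast
      hence "(v,y,u) \<in> parses X w" using z u unfolding parses_alt by simp
      thus "u \<in> ?f ` parses X w" by force
    qed
  qed
  thus ?thesis by (rule bij_betw_same_card)
qed

lemma nosuf_rev: "nosuf (rev`X) (rev u) \<longleftrightarrow> nopre X u"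
  unfolding nosuf_def nopre_def by (auto simp: suffix_to_prefix)

lemma nopre_rev: "nopre (rev`X) (rev v) \<longleftrightarrow> nosuf X v"
  unfolding nosuf_def nopre_def by (auto simp: suffix_to_prefix)

lemma Cat_rev_iff: "rev y \<in> Cat (rev ` X) \<longleftrightarrow> y \<in> Cat X"
proof
  assume "rev y \<in> Cat (rev ` X)"
  hence "rev (rev y) \<in> Cat (rev ` rev ` X)" by (rule Cat_rev)
  thus "y \<in> Cat X" by (simp add: image_image)
qed (rule Cat_rev)

definition revt :: "'a list \<times> 'a list \<times> 'a list \<Rightarrow> 'a list \<times> 'a list \<times> 'a list" where
  "revt = (\<lambda>(v,y,u). (rev u, rev y, rev v))"

lemma revt_revt: "revt (revt t) = t"
  unfolding revt_def by (cases t) auto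

lemma revt_in: "t \<in> parses X w \<Longrightarrow> revt t \<in> parses (rev`X) (rev w)"
proof -
  assume "t \<in> parses X w"
  then obtain v y u where t: "t = (v,y,u)" "w = v @ y @ u" "nosuf X v" "y \<in> Cat X" "nopre X u"
    unfolding parses_alt by auto
  have "rev w = rev u @ rev y @ rev v" using t by simp
  moreover have "nosuf (rev`X) (rev u)" using t nosuf_rev by metis
  moreover have "nopre (rev`X) (rev v)" using t nopre_rev by metis
  moreover have "rev y \<in> Cat (rev`X)" using t Cat_rev by metis
  ultimately show ?thesis unfolding parses_alt revt_def t by simp
qed

lemma parses_rev_card: "card (parses (rev`X) (rev w)) = card (parses X w)"
proof -
  have e: "revt ` parses X w = parses (rev`X) (rev w)"
  proof (rule set_eqI, rule iffI)
    fix t assume "t \<in> revt ` parses X w" thus "t \<in> parses (rev`X) (rev w)" using revt_in by blast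
  next
    fix t assume "t \<in> parses (rev`X) (rev w)"
    hence "revt t \<in> parses (rev`rev`X) (rev (rev w))" by (rule revt_in)
    hence "revt t \<in> parses X w" by (simp add: image_image)
    hence "revt (revt t) \<in> revt ` parses X w" by (rule imageI)
    thus "t \<in> revt ` parses X w" by (simp add: revt_revt)
  qed
  have "inj_on revt (parses X w)" by (metis inj_onI revt_revt)
  hence "card (revt ` parses X w) = card (parses X w)" by (rule card_image)
  thus ?thesis using e by simp
qed

lemma bifix_rev: "bifix_code X \<Longrightarrow> bifix_code (rev`X)"
  unfolding bifix_code_def by (auto simp: strict_suffix_to_prefix)

lemma parses_card_pre:
  assumes ne: "[] \<notin> X" and pc: "\<forall>x\<in>X. \<forall>y\<in>X. \<not> strict_prefix x y"
  shows "card (parses X w) = card {v. prefix v w \<and> nosuf X v}"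
proof -
  have ne': "[] \<notin> rev`X" using ne by auto
  have sc': "\<forall>x\<in>rev`X. \<forall>y\<in>rev`X. \<not> strict_suffix x y" using pc by (auto simp: strict_suffix_to_prefix)
  have "card (parses X w) = card (parses (rev`X) (rev w))" by (simp add: parses_rev_card)
  also have "\<dots> = card {u. suffix u (rev w) \<and> nopre (rev`X) u}" by (rule parses_card_suf[OF ne' sc'])
  also have "{u. suffix u (rev w) \<and> nopre (rev`X) u} = rev ` {v. prefix v w \<and> nosuf X v}"
  proof (rule set_eqI, rule iffI)
    fix u assume "u \<in> {u. suffix u (rev w) \<and> nopre (rev`X) u}"
    hence "suffix (rev (rev u)) (rev w)" "nopre (rev`X) (rev (rev u))" by auto
    hence "prefix (rev u) w" "nosuf X (rev u)"
      by (simp add: suffix_to_prefix, simp only: nopre_rev)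
    thus "u \<in> rev ` {v. prefix v w \<and> nosuf X v}" by (intro image_eqI[of _ _ "rev u"]) auto
  next
    fix u assume "u \<in> rev ` {v. prefix v w \<and> nosuf X v}"
    then obtain v where "u = rev v" "prefix v w" "nosuf X v" by auto
    thus "u \<in> {u. suffix u (rev w) \<and> nopre (rev`X) u}" using nopre_rev by (auto simp: suffix_to_prefix)
  qed
  also have "card (rev ` {v. prefix v w \<and> nosuf X v}) = card {v. prefix v w \<and> nosuf X v}"
    by (rule card_image) (simp add: inj_on_def)
  finally show ?thesis .
qed

context sturm begin

lemma rs_ext: assumes wF: "w \<in> F" shows "\<exists>t. right_special F (w@t)"
proof (rule ccontr)
  assume nors: "\<not> (\<exists>t. right_special F (w@t))"
  obtain i where oi: "occ x w i" using wF factors_iff by blast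
  obtain j where j: "j \<ge> Suc i" "occ x w j" using recur[OF wF] by blast
  have claim: "occ x (map x [i..<i+length w+n]) j" for n
  proof (induction n)
    case 0
    have "map x [i..<i+length w] = w" using oi unfolding occ_def .
    thus ?case using j by simp
  next
    case (Suc n)
    define u where "u = map x [i..<i+length w+n]"
    have lu: "length u = length w + n" unfolding u_def by simp
    have "[i..<i+length w+n] = [i..<i+length w] @ [i+length w..<i+length w+n]"
      by (rule upt_add_eq_append) simp
    hence "u = w @ map x [i+length w..<i+length w+n]" unfolding u_def using oi unfolding occ_def by simp
    hence nr: "\<not> right_special F u" using nors by blast
    have ou: "occ x u i" unfolding u_def occ_def by (simp add: add.assoc)
    have oj: "occ x u j" using Suc.IH unfolding u_def .
    have uF: "u \<in> F" using oj factors_iff by blast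
    have e1: "u @ [x (i + length u)] \<in> F" using occ_ext[OF ou] factors_iff by blast
    have e2: "u @ [x (j + length u)] \<in> F" using occ_ext[OF oj] factors_iff by blast
    have eq: "x (i + length u) = x (j + length u)" using not_rs_unique[OF uF nr e1 e2] .
    have "map x [i..<i+length w+Suc n] = u @ [x (i + length u)]" unfolding u_def by (simp add: add.assoc)
    also have "\<dots> = u @ [x (j + length u)]" using eq by simp
    finally show ?case using occ_ext[OF oj] by simp
  qed
  define M where "M = i + length w"
  define p where "p = j - i"
  have p1: "p \<ge> 1" using j unfolding p_def by simp
  have per: "x (m + p) = x m" if "m \<ge> M" for m
  proof -
    define s where "s = m - M"
    have "occ x (map x [i..<i+length w+Suc s]) j" by (rule claim)
    hence "x (j + (length w + s)) = (map x [i..<i+length w+Suc s]) ! (length w + s)"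
      unfolding occ_nth by simp
    also have "\<dots> = x (i + (length w + s))" by (simp del: upt_Suc)
    finally have "x (j + (length w + s)) = x (i + (length w + s))" .
    moreover have "j + (length w + s) = m + p" "i + (length w + s) = m"
      using that j unfolding s_def M_def p_def by simp_all
    ultimately show ?thesis by simp
  qed
  obtain u where u: "length u = p" "right_special F u" using rs_exists by blast
  then obtain a b where ab: "a \<noteq> b" "u@[a] \<in> F" "u@[b] \<in> F" unfolding right_special_def by blast
  obtain ia where ia: "ia \<ge> M" "occ x (u@[a]) ia" using recur[OF ab(2)] by blast
  obtain ib where ib: "ib \<ge> M" "occ x (u@[b]) ib" using recur[OF ab(3)] by blast
  have "x (ia + p) = a" using ia(2) u(1) by (simp add: occ_append) (simp add: occ_nth)
  moreover have "x (ib + p) = b" using ib(2) u(1) by (simp add: occ_append) (simp add: occ_nth)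
  moreover have "x ia = u!0"
  proof -
    have "occ x u ia" using ia(2) by (simp add: occ_append)
    moreover have "0 < length u" using u(1) p1 by simp
    ultimately have "x (ia+0) = u!0" unfolding occ_nth by blast
    thus ?thesis by simp
  qed
  moreover have "x ib = u!0"
  proof -
    have "occ x u ib" using ib(2) by (simp add: occ_append)
    moreover have "0 < length u" using u(1) p1 by simp
    ultimately have "x (ib+0) = u!0" unfolding occ_nth by blast
    thus ?thesis by simp
  qed
  moreover have "x (ia + p) = x ia" "x (ib + p) = x ib" using per ia(1) ib(1) by auto
  ultimately show False using ab(1) by simp
qed

end

locale core = sturm +
  fixes X :: "'a list set"
  assumes finA: "finite A" and fin: "finite X" and bif: "bifix_code X" and sub: "X \<subseteq> F"
    and nonemp: "X \<noteq> {}"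
    and maxp: "\<forall>w\<in>F. (\<exists>y\<in>X. prefix y w) \<or> (\<exists>y\<in>X. prefix w y)"
begin

definition P where "P = {p. \<exists>y\<in>X. strict_prefix p y}"
definition R where "R = {u. right_special F u}"

lemma ne: "[] \<notin> X" using bif unfolding bifix_code_def by simp
lemma pc: "y \<in> X \<Longrightarrow> z \<in> X \<Longrightarrow> \<not> strict_prefix y z" using bif unfolding bifix_code_def by simp
lemma sc: "y \<in> X \<Longrightarrow> z \<in> X \<Longrightarrow> \<not> strict_suffix y z" using bif unfolding bifix_code_def by simp

lemma P_fin: "finite P"
proof -
  have "P \<subseteq> (\<Union>y\<in>X. set (prefixes y))" unfolding P_def by (auto simp: strict_prefix_def)
  thus ?thesis by (rule finite_subset) (use fin in auto)
qed

lemma P_F: "p \<in> P \<Longrightarrow> p \<in> F"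
proof -
  assume "p \<in> P"
  then obtain y where "y \<in> X" "strict_prefix p y" unfolding P_def by blast
  thus ?thesis using sub factors_prefix by (metis strict_prefix_def subsetD)
qed

lemma Nil_P: "[] \<in> P"
proof -
  obtain y where "y \<in> X" using nonemp by blast
  hence "y \<noteq> []" using ne by metis
  hence "strict_prefix [] y" by (simp add: strict_prefix_def)
  thus ?thesis unfolding P_def using \<open>y \<in> X\<close> by blast
qed

lemma PX_disj: "P \<inter> X = {}"
  unfolding P_def using pc by blast

lemma child: assumes p: "p \<in> P" and pa: "p@[a] \<in> F" shows "p@[a] \<in> P \<union> X"
proof -
  obtain y0 where y0: "y0 \<in> X" "strict_prefix p y0" using p unfolding P_def by blast
  from maxp pa consider y where "y \<in> X" "prefix y (p@[a])" | y where "y \<in> X" "prefix (p@[a]) y"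
    by metis
  thus ?thesis
  proof cases
    case 1
    hence "y = p@[a] \<or> prefix y p" by (simp add: prefix_snoc)
    thus ?thesis
    proof
      assume "y = p@[a]" thus ?thesis using 1 by simp
    next
      assume "prefix y p"
      hence "strict_prefix y y0" using y0(2) by (metis prefix_order.le_less_trans)
      thus ?thesis using pc 1 y0 by metis
    qed
  next
    case 2
    show ?thesis
    proof (cases "p@[a] = y")
      case True thus ?thesis using 2 by simp
    next
      case False
      hence "strict_prefix (p@[a]) y" using 2 by (simp add: strict_prefix_def)
      thus ?thesis unfolding P_def using 2 by blast
    qed
  qed
qed

lemma tree: "P \<union> X = insert [] (\<Union>p\<in>P. (\<lambda>a. p@[a]) ` {a. p@[a] \<in> F})"
proof (rule set_eqI, rule iffI)
  fix z assume z: "z \<in> P \<union> X"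
  show "z \<in> insert [] (\<Union>p\<in>P. (\<lambda>a. p@[a]) ` {a. p@[a] \<in> F})"
  proof (cases "z = []")
    case True thus ?thesis by simp
  next
    case False
    have zz: "z = butlast z @ [last z]" using False by simp
    obtain y where y: "y \<in> X" "prefix z y"
    proof (cases "z \<in> X")
      case True thus ?thesis using that[of z] by simp
    next
      case False
      hence "z \<in> P" using z by simp
      then obtain y where "y \<in> X" "strict_prefix z y" unfolding P_def by blast
      thus ?thesis using that[of y] by (simp add: strict_prefix_def)
    qed
    have "strict_prefix (butlast z) z" using False zz
      by (metis append_Nil2 not_Cons_self2 prefix_order.dual_order.not_eq_order_implies_strict prefixI same_append_eq)
    hence "strict_prefix (butlast z) y" using y(2) by (metis prefix_order.less_le_trans)
    hence bP: "butlast z \<in> P" unfolding P_def using y(1) by blast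
    have "z \<in> F" using z P_F sub by blast
    hence "butlast z @ [last z] \<in> F" using zz by simp
    thus ?thesis using bP zz by blast
  qed
next
  fix z assume "z \<in> insert [] (\<Union>p\<in>P. (\<lambda>a. p@[a]) ` {a. p@[a] \<in> F})"
  thus "z \<in> P \<union> X" using Nil_P child by blast
qed

lemma ext_card: "p \<in> P \<Longrightarrow> card {a. p@[a] \<in> F} = (if p \<in> R then card A else 1)"
proof -
  assume p: "p \<in> P"
  show ?thesis
  proof (cases "p \<in> R")
    case True
    hence "{a. p@[a] \<in> F} = A" unfolding R_def using rs_all ext_in_A by blast
    thus ?thesis using True by simp
  next
    case False
    have pF: "p \<in> F" using P_F p .
    obtain a where a: "p@[a] \<in> F" using factors_ext[OF pF] by blast
    have "{a. p@[a] \<in> F} = {a}"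
      using a not_rs_unique[OF pF] False unfolding R_def by blast
    thus ?thesis using False by simp
  qed
qed

lemma card_X: "card X = 1 + (card A - 1) * card (P \<inter> R)"
proof -
  let ?U = "\<Union>p\<in>P. (\<lambda>a. p@[a]) ` {a. p@[a] \<in> F}"
  have fS: "finite {a. p@[a] \<in> F}" for p
  proof -
    have "{a. p@[a] \<in> F} \<subseteq> A" using ext_in_A by blast
    thus ?thesis using finA by (rule finite_subset)
  qed
  have c1: "card (P \<union> X) = card P + card X" using P_fin fin PX_disj by (rule card_Un_disjoint)
  have "[] \<notin> ?U" by auto
  moreover have "finite ?U" using P_fin fS by blast
  ultimately have c2: "card (insert [] ?U) = Suc (card ?U)" by simp
  have "card ?U = (\<Sum>p\<in>P. card ((\<lambda>a. p@[a]) ` {a. p@[a] \<in> F}))"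
    using P_fin
  proof (rule card_UN_disjoint)
    show "\<forall>p\<in>P. finite ((\<lambda>a. p@[a]) ` {a. p@[a] \<in> F})" using fS by blast
    show "\<forall>p\<in>P. \<forall>q\<in>P. p \<noteq> q \<longrightarrow> (\<lambda>a. p@[a]) ` {a. p@[a] \<in> F} \<inter> (\<lambda>a. q@[a]) ` {a. q@[a] \<in> F} = {}"
      by auto
  qed
  also have "\<dots> = (\<Sum>p\<in>P. card {a. p@[a] \<in> F})"
    by (rule sum.cong) (auto intro!: card_image inj_onI)
  also have "\<dots> = (\<Sum>p\<in>P. if p \<in> R then card A else 1)"
    by (rule sum.cong) (auto simp: ext_card)
  also have "\<dots> = card A * card (P \<inter> R) + card (P - R)"
    using P_fin by (simp add: sum.If_cases Diff_eq Int_def)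
  finally have c3: "card ?U = card A * card (P \<inter> R) + card (P - R)" .
  have c4: "card P = card (P \<inter> R) + card (P - R)"
    using P_fin by (metis Diff_Diff_Int Diff_disjoint Diff_partition Int_Diff_Un Int_lower1 Int_commute card_Un_disjoint finite_Diff finite_Int)
  have A1: "card A \<ge> 1" using finA letters by (metis One_nat_def Suc_leI card_gt_0_iff empty_iff)
  have "card P + card X = Suc (card A * card (P \<inter> R) + card (P - R))"
    using c1 c2 c3 tree by simp
  hence "card X = Suc (card A * card (P \<inter> R)) - card (P \<inter> R)" using c4 by simp
  moreover have "card A * card (P \<inter> R) \<ge> card (P \<inter> R)" using A1 by simp
  moreover have "card A * card (P \<inter> R) - card (P \<inter> R) = (card A - 1) * card (P \<inter> R)"
    by (simp add: diff_mult_distrib)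
  ultimately show ?thesis by (metis Suc_diff_le plus_1_eq_Suc)
qed

end

context core begin

lemma sc': "\<forall>y\<in>X. \<forall>z\<in>X. \<not> strict_suffix y z" using sc by blast
lemma pc': "\<forall>y\<in>X. \<forall>z\<in>X. \<not> strict_prefix y z" using pc by blast

lemma nopre_iff: assumes "w \<in> F" shows "nopre X w \<longleftrightarrow> w \<in> P"
proof
  assume np: "nopre X w"
  from maxp assms consider y where "y \<in> X" "prefix y w" | y where "y \<in> X" "prefix w y" by metis
  thus "w \<in> P"
  proof cases
    case 1 thus ?thesis using np unfolding nopre_def by metis
  next
    case 2
    have "w \<noteq> y" using np 2 unfolding nopre_def by (metis prefix_order.order_refl)
    hence "strict_prefix w y" using 2 by (simp add: strict_prefix_def)
    thus ?thesis unfolding P_def using 2 by blast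
  qed
next
  assume "w \<in> P"
  then obtain y where y: "y \<in> X" "strict_prefix w y" unfolding P_def by blast
  show "nopre X w" unfolding nopre_def
  proof
    assume "\<exists>p\<in>X. prefix p w"
    then obtain q where "q \<in> X" "prefix q w" by blast
    hence "strict_prefix q y" using y(2) by (metis prefix_order.le_less_trans)
    thus False using pc \<open>q \<in> X\<close> y(1) by metis
  qed
qed

lemma delta_suf: assumes "w \<in> F" shows "delta X w = card {u. suffix u w \<and> u \<in> P}"
proof -
  have "delta X w = card {u. suffix u w \<and> nopre X u}"
    unfolding delta_def by (rule parses_card_suf[OF ne sc'])
  also have "{u. suffix u w \<and> nopre X u} = {u. suffix u w \<and> u \<in> P}"
  proof (rule Collect_cong)
    fix u show "(suffix u w \<and> nopre X u) = (suffix u w \<and> u \<in> P)"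
      using nopre_iff factors_suffix assms by metis
  qed
  finally show ?thesis .
qed

lemma delta_mono: "delta X w \<le> delta X (w@t)"
proof -
  have "delta X w = card {v. prefix v w \<and> nosuf X v}"
    unfolding delta_def by (rule parses_card_pre[OF ne pc'])
  also have "\<dots> \<le> card {v. prefix v (w@t) \<and> nosuf X v}"
  proof (rule card_mono)
    show "finite {v. prefix v (w@t) \<and> nosuf X v}"
      by (rule finite_subset[of _ "set (prefixes (w@t))"]) auto
    show "{v. prefix v w \<and> nosuf X v} \<subseteq> {v. prefix v (w@t) \<and> nosuf X v}"
      by (auto intro: prefix_order.order_trans)
  qed
  also have "\<dots> = delta X (w@t)"
    unfolding delta_def by (rule parses_card_pre[OF ne pc', symmetric])
  finally show ?thesis .
qed

lemma delta_rs: assumes "right_special F u" shows "delta X u \<le> card (P \<inter> R)"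
proof -
  have uF: "u \<in> F" using assms unfolding right_special_def by simp
  have "{s. suffix s u \<and> s \<in> P} \<subseteq> P \<inter> R" unfolding R_def using rs_suffix[OF assms] by blast
  hence "card {s. suffix s u \<and> s \<in> P} \<le> card (P \<inter> R)" using P_fin by (intro card_mono) auto
  thus ?thesis using delta_suf[OF uF] by simp
qed

lemma delta_le: assumes "w \<in> F" shows "delta X w \<le> card (P \<inter> R)"
proof -
  obtain t where "right_special F (w@t)" using rs_ext[OF assms] by blast
  thus ?thesis using delta_mono[of w t] delta_rs by (meson le_trans)
qed

lemma delta_att: "\<exists>u\<in>F. delta X u = card (P \<inter> R)"
proof -
  define N where "N = Suc (Max (length ` X))"
  have lenX: "length y < N" if "y \<in> X" for y
    unfolding N_def using that fin by (simp add: le_imp_less_Suc)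
  obtain u where u: "length u = N" "right_special F u" using rs_exists by blast
  have uF: "u \<in> F" using u unfolding right_special_def by simp
  have "P \<inter> R \<subseteq> {s. suffix s u \<and> s \<in> P}"
  proof
    fix p assume p: "p \<in> P \<inter> R"
    then obtain y where y: "y \<in> X" "strict_prefix p y" unfolding P_def by blast
    have "length p < length y" using y(2) by (rule prefix_length_less)
    hence lp: "length p < N" using lenX y(1) by (meson less_trans)
    define s where "s = drop (N - length p) u"
    have "suffix s u" unfolding s_def by (rule suffix_drop)
    hence "right_special F s" using rs_suffix u(2) by blast
    moreover have "length s = length p" unfolding s_def using u(1) lp by simp
    ultimately have "s = p" using rs_unique p unfolding R_def by blast
    thus "p \<in> {s. suffix s u \<and> s \<in> P}" using \<open>suffix s u\<close> p by blast
  qed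
  hence "card (P \<inter> R) \<le> delta X u"
    using delta_suf[OF uF] by (metis (no_types, lifting) P_fin card_mono finite_subset mem_Collect_eq subsetI)
  thus ?thesis using delta_rs[OF u(2)] uF by (intro bexI[of _ u]) simp_all
qed

lemma degree_eq: "degree F X = enat (card (P \<inter> R))"
proof (rule antisym)
  show "degree F X \<le> enat (card (P \<inter> R))" unfolding degree_def
    by (rule SUP_least) (simp add: delta_le)
  obtain u where "u \<in> F" "delta X u = card (P \<inter> R)" using delta_att by blast
  thus "enat (card (P \<inter> R)) \<le> degree F X" unfolding degree_def
    by (metis SUP_upper)
qed

lemma core_result: "enat (card X) = enat (card A - 1) * degree F X + 1"
  using card_X degree_eq by (simp add: one_enat_def)

end

lemma upt_split: "i \<le> j \<Longrightarrow> j \<le> k \<Longrightarrow> [i..<k] = [i..<j] @ [j..<k]"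
proof -
  assume "i \<le> j" "j \<le> k"
  then obtain d where "k = j + d" by (metis le_add_diff_inverse)
  thus ?thesis using upt_add_eq_append[OF \<open>i \<le> j\<close>, of d] by simp
qed

lemma occ_map: "i \<le> j \<Longrightarrow> occ x (map x [i..<j]) i" unfolding occ_def by simp

theorem mainTheorem12:
  fixes A :: "'a set" and k :: nat and F X :: "'a list set"
  assumes "finite A" and "card A = k"
    and "sturmian_set A F"
    and "finite X" and "F_maximal_bifix F X"
  shows "enat (card X) = enat (k - 1) * degree F X + 1"
proof -
  obtain x where se: "strict_episturmian A x" and FF: "F = factors x"
    using assms(3) unfolding sturmian_set_def by blast
  interpret S: sturm A x by unfold_locales (rule se)
  have bif: "bifix_code X" and sub: "X \<subseteq> F"
    and maxb: "\<forall>Y. bifix_code Y \<and> Y \<subseteq> F \<and> X \<subseteq> Y \<longrightarrow> Y = X"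
    using assms(5) unfolding F_maximal_bifix_def by auto
  have nonemp: "X \<noteq> {}"
  proof
    assume X0: "X = {}"
    have "bifix_code {[x 0]}" unfolding bifix_code_def by simp
    moreover have "[x 0] \<in> F" unfolding FF factors_iff occ_def by (rule exI[of _ 0]) simp
    ultimately have "{[x 0]} = X" using maxb X0 by blast
    thus False using X0 by simp
  qed
  have dich: "(\<forall>w\<in>F. (\<exists>y\<in>X. prefix y w) \<or> (\<exists>y\<in>X. prefix w y)) \<or>
              (\<forall>w\<in>F. (\<exists>y\<in>X. suffix y w) \<or> (\<exists>y\<in>X. suffix w y))"
  proof (rule ccontr)
    assume neg: "\<not> ?thesis"
    then obtain w1 where w1: "w1 \<in> F" "\<not>(\<exists>y\<in>X. prefix y w1)" "\<not>(\<exists>y\<in>X. prefix w1 y)" by blast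
    from neg obtain w2 where w2: "w2 \<in> F" "\<not>(\<exists>y\<in>X. suffix y w2)" "\<not>(\<exists>y\<in>X. suffix w2 y)" by blast
    obtain i1 where i1: "occ x w1 i1" using w1(1) FF factors_iff by blast
    obtain j where j: "j \<ge> i1 + length w1" "occ x w2 j" using S.recur w1(1) w2(1) FF by blast
    define y where "y = map x [i1..<j + length w2]"
    have "i1 \<le> j + length w2" using j by simp
    hence yF: "y \<in> F" unfolding FF factors_iff y_def using occ_map by blast
    have "[i1..<j + length w2] = [i1..<i1+length w1] @ [i1+length w1..<j + length w2]"
      using j by (intro upt_split) simp_all
    hence "y = w1 @ map x [i1+length w1..<j + length w2]"
      unfolding y_def using i1 unfolding occ_def by simp
    hence pw1: "prefix w1 y" by simp
    have "[i1..<j + length w2] = [i1..<j] @ [j..<j + length w2]"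
      using j by (intro upt_split) simp_all
    hence "y = map x [i1..<j] @ w2"
      unfolding y_def using j(2) unfolding occ_def by simp
    hence sw2: "suffix w2 y" unfolding suffix_def by blast
    obtain y0 where "y0 \<in> X" using nonemp by blast
    have "w1 \<noteq> []" using w1(3) \<open>y0 \<in> X\<close> by (metis Nil_prefix)
    hence yne: "y \<noteq> []" using pw1 by auto
    have np1: "\<not> strict_prefix y z" if "z \<in> X" for z
      using w1(3) that pw1 by (metis prefix_order.order_trans strict_prefix_def)
    have np2: "\<not> strict_prefix z y" if "z \<in> X" for z
    proof
      assume "strict_prefix z y"
      hence "prefix z y" by (simp add: strict_prefix_def)
      hence "prefix z w1 \<or> prefix w1 z" using pw1 prefix_same_cases by blast
      thus False using w1 that by blast
    qed
    have ns1: "\<not> strict_suffix y z" if "z \<in> X" for z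
      using w2(3) that sw2 by (metis suffix_order.order_trans strict_suffix_def)
    have ns2: "\<not> strict_suffix z y" if "z \<in> X" for z
    proof
      assume "strict_suffix z y"
      hence "suffix z y" by (simp add: strict_suffix_def)
      hence "suffix z w2 \<or> suffix w2 z" using sw2 suffix_same_cases by blast
      thus False using w2 that by blast
    qed
    have "bifix_code (insert y X)"
      using bif yne np1 np2 ns1 ns2 unfolding bifix_code_def by auto
    moreover have "insert y X \<subseteq> F" using yF sub by simp
    ultimately have "insert y X = X" using maxb by blast
    hence "y \<in> X" by blast
    thus False using w1(3) pw1 by blast
  qed
  have cA: "card A = k" using assms(2) .
  from dich show ?thesis
  proof
    assume mp: "\<forall>w\<in>F. (\<exists>y\<in>X. prefix y w) \<or> (\<exists>y\<in>X. prefix w y)"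
    interpret C: core A x X
      by unfold_locales (use assms(1,4) bif sub nonemp mp FF in auto)
    show ?thesis using C.core_result FF cA by simp
  next
    assume ms: "\<forall>w\<in>F. (\<exists>y\<in>X. suffix y w) \<or> (\<exists>y\<in>X. suffix w y)"
    have mp': "\<forall>w\<in>F. (\<exists>y\<in>rev`X. prefix y w) \<or> (\<exists>y\<in>rev`X. prefix w y)"
    proof
      fix w assume "w \<in> F"
      hence "rev w \<in> F" using S.rev_closed FF by simp
      then consider y where "y \<in> X" "suffix y (rev w)" | y where "y \<in> X" "suffix (rev w) y"
        using ms by metis
      thus "(\<exists>y\<in>rev`X. prefix y w) \<or> (\<exists>y\<in>rev`X. prefix w y)"
      proof cases
        case 1
        hence "prefix (rev y) w" by (simp add: suffix_to_prefix)
        thus ?thesis using 1 by blast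
      next
        case 2
        hence "prefix w (rev y)" by (simp add: suffix_to_prefix)
        thus ?thesis using 2 by blast
      qed
    qed
    have sub': "rev`X \<subseteq> F" using sub S.rev_closed FF by auto
    interpret C: core A x "rev`X"
      by unfold_locales (use assms(1,4) bifix_rev[OF bif] sub' nonemp mp' FF in auto)
    have c1: "card (rev`X) = card X" by (rule card_image) (simp add: inj_on_def)
    have revF: "rev ` F = F"
    proof
      show "rev ` F \<subseteq> F" using S.rev_closed FF by auto
      show "F \<subseteq> rev ` F"
      proof
        fix w assume "w \<in> F"
        hence "rev w \<in> F" using S.rev_closed FF by simp
        thus "w \<in> rev ` F" by (intro image_eqI[of _ _ "rev w"]) simp_all
      qed
    qed
    have "degree F (rev`X) = (SUP w\<in>F. enat (delta X (rev w)))"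
      unfolding degree_def delta_def
      by (rule SUP_cong) (simp_all add: parses_rev_card[of X "rev _", simplified])
    also have "\<dots> = (SUP w\<in>rev`F. enat (delta X w))" by (simp add: image_image)
    also have "\<dots> = degree F X" unfolding degree_def revF ..
    finally have c2: "degree F (rev`X) = degree F X" .
    show ?thesis using C.core_result FF cA c1 c2 by simp
  qed
qed

end
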